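(* Let $A$ be a Banach algebra and $a_0\in Z(A)\setminus\{0\}$ with $\|a_0\|\le 1$. Then for every integer $n\ge 3$: (i) $Mul_n(A)\bullet_{a_0}Mul_2(A)\subseteq Mul_2(A)$; (ii) $Mul_{n-1}(A)$ is a closed left ideal of $(Mul_n(A),\bullet_{a_0})$, so that $Mul_2(A)\lhd Mul_3(A)\lhd\cdots\lhd Mul_{n-1}(A)\lhd Mul_n(A)\lhd\cdots$.
   Context: $Z(A)$ is the center of $A$. For $m\ge 2$, $Mul_m(A)$ is the set of bounded linear maps $T:A\to A$ with $T(a_1\cdots a_m)=a_1T(a_2\cdots a_m)=T(a_1\cdots a_{m-1})a_m$ for all $a_i\in A$. On $Mul_n(A)$ the product is $S\bullet_{a_0}T(a)=S(a_0^{n-2}T(a))$. *)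

theory Defs
  imports "HOL-Analysis.Analysis"
begin

text \<open>Product of a nonempty list in a (possibly non-unital) algebra.
  The value on the empty list is irrelevant and never used.\<close>
fun lprod :: "'a::{times,zero} list \<Rightarrow> 'a" where
  "lprod [] = 0"
| "lprod [a] = a"
| "lprod (a # b # xs) = a * lprod (b # xs)"

text \<open>Positive powers a^k (k \<ge> 1) without requiring a unit.\<close>
definition npow :: "'a::{times,zero} \<Rightarrow> nat \<Rightarrow> 'a" where
  "npow a k = lprod (replicate k a)"

definition center :: "'a::times set" where
  "center = {z. \<forall>x. z * x = x * z}"

definition Mul :: "nat \<Rightarrow> ('a::real_normed_algebra \<Rightarrow> 'a) set" where
  "Mul m = {T. bounded_linear T \<and>
     (\<forall>as. length as = m \<longrightarrow>
        T (lprod as) = hd as * T (lprod (tl as)) \<and>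
        T (lprod as) = T (lprod (butlast as)) * last as)}"

definition mulprod :: "nat \<Rightarrow> 'a::real_normed_algebra \<Rightarrow> ('a \<Rightarrow> 'a) \<Rightarrow> ('a \<Rightarrow> 'a) \<Rightarrow> ('a \<Rightarrow> 'a)" where
  "mulprod n a0 S T = (\<lambda>a. S (npow a0 (n - 2) * T a))"

definition MulL :: "nat \<Rightarrow> ('a::{real_normed_algebra,banach} \<Rightarrow>\<^sub>L 'a) set" where
  "MulL m = {T. blinfun_apply T \<in> Mul m}"

end

theory Submission
  imports Defs
begin

lemma lprod_cons: "xs \<noteq> [] \<Longrightarrow> lprod (a # xs) = a * lprod xs"
  by (cases xs) auto

lemma lprod_snoc:
  fixes xs :: "'a::{semigroup_mult,zero} list"
  shows "xs \<noteq> [] \<Longrightarrow> lprod (xs @ [b]) = lprod xs * b"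
proof (induction xs rule: lprod.induct)
  case 1 then show ?case by simp
next
  case (2 a) then show ?case by simp
next
  case (3 a c xs) then show ?case by (simp add: mult.assoc)
qed

lemma lprod_merge:
  fixes b c :: "'a::{semigroup_mult,zero}"
  shows "lprod ((b*c) # zs) = lprod (b # c # zs)"
  by (cases zs) (auto simp: mult.assoc)

lemma Mul_iff:
  fixes T :: "'a::real_normed_algebra \<Rightarrow> 'a"
  assumes "m \<ge> 2"
  shows "T \<in> Mul m \<longleftrightarrow> bounded_linear T
     \<and> (\<forall>a ys. length ys = m - 1 \<longrightarrow> T (a * lprod ys) = a * T (lprod ys))
     \<and> (\<forall>xs b. length xs = m - 1 \<longrightarrow> T (lprod xs * b) = T (lprod xs) * b)"
proof
  assume T: "T \<in> Mul m"
  show "bounded_linear T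
     \<and> (\<forall>a ys. length ys = m - 1 \<longrightarrow> T (a * lprod ys) = a * T (lprod ys))
     \<and> (\<forall>xs b. length xs = m - 1 \<longrightarrow> T (lprod xs * b) = T (lprod xs) * b)"
  proof (intro conjI allI impI)
    show "bounded_linear T" using T by (simp add: Mul_def)
  next
    fix a and ys :: "'a list" assume l: "length ys = m - 1"
    then have ne: "ys \<noteq> []" using assms by auto
    have "length (a # ys) = m" using l assms by simp
    then have "T (lprod (a # ys)) = hd (a#ys) * T (lprod (tl (a#ys)))"
      using T unfolding Mul_def by blast
    then show "T (a * lprod ys) = a * T (lprod ys)" using ne by (simp add: lprod_cons)
  next
    fix b and xs :: "'a list" assume l: "length xs = m - 1"
    then have ne: "xs \<noteq> []" using assms by auto
    have "length (xs @ [b]) = m" using l assms by simp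
    then have "T (lprod (xs @ [b])) = T (lprod (butlast (xs @ [b]))) * last (xs @ [b])"
      using T unfolding Mul_def by blast
    then show "T (lprod xs * b) = T (lprod xs) * b" using ne by (simp add: lprod_snoc)
  qed
next
  assume H: "bounded_linear T
     \<and> (\<forall>a ys. length ys = m - 1 \<longrightarrow> T (a * lprod ys) = a * T (lprod ys))
     \<and> (\<forall>xs b. length xs = m - 1 \<longrightarrow> T (lprod xs * b) = T (lprod xs) * b)"
  show "T \<in> Mul m" unfolding Mul_def
  proof (intro CollectI conjI allI impI)
    show "bounded_linear T" using H by simp
  next
    fix as :: "'a list" assume l: "length as = m"
    then obtain a ys where as: "as = a # ys" using assms by (cases as) auto
    then have ne: "ys \<noteq> []" and ly: "length ys = m - 1" using l assms by auto
    show "T (lprod as) = hd as * T (lprod (tl as))"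
      using H ly ne by (simp add: as lprod_cons)
  next
    fix as :: "'a list" assume l: "length as = m"
    then have "as \<noteq> []" using assms by auto
    then obtain xs b where as: "as = xs @ [b]" by (metis append_butlast_last_id)
    then have ne: "xs \<noteq> []" and ly: "length xs = m - 1" using l assms by auto
    show "T (lprod as) = T (lprod (butlast as)) * last as"
      using H ly ne by (simp add: as lprod_snoc)
  qed
qed

lemma npow_central:
  fixes a0 :: "'a::{semigroup_mult,mult_zero}"
  assumes "a0 \<in> center"
  shows "lprod (replicate k a0) * x = x * lprod (replicate k a0)"
proof (induction k arbitrary: x)
  case 0 then show ?case by simp
next
  case (Suc k)
  show ?case
  proof (cases "k = 0")
    case True then show ?thesis using assms by (simp add: center_def)
  next
    case False
    have c: "a0 * y = y * a0" for y using assms by (simp add: center_def)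
    have "lprod (replicate (Suc k) a0) = a0 * lprod (replicate k a0)"
      using False by (simp add: lprod_cons)
    then show ?thesis using Suc c by (metis mult.assoc)
  qed
qed

lemma key:
  fixes S :: "'a::real_normed_algebra \<Rightarrow> 'a"
  assumes S: "S \<in> Mul n" and n: "n \<ge> 3" and a0: "a0 \<in> center"
  shows "S (npow a0 (n-2) * (a * t)) = a * S (npow a0 (n-2) * t)"
    and "S (npow a0 (n-2) * (t * b)) = S (npow a0 (n-2) * t) * b"
proof -
  let ?ys = "replicate (n-2) a0 @ [t]"
  have l: "length ?ys = n - 1" using n by simp
  have ne: "replicate (n-2) a0 \<noteq> []" using n by simp
  have lp: "lprod ?ys = npow a0 (n-2) * t"
    using ne by (simp add: lprod_snoc npow_def)
  have SS: "\<forall>a ys. length ys = n - 1 \<longrightarrow> S (a * lprod ys) = a * S (lprod ys)"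
     "\<forall>xs b. length xs = n - 1 \<longrightarrow> S (lprod xs * b) = S (lprod xs) * b"
    using S Mul_iff[of n S] n by auto
  have "npow a0 (n-2) * (a * t) = a * (npow a0 (n-2) * t)"
    using npow_central[OF a0, of "n-2" a] by (simp add: npow_def mult.assoc[symmetric])
  then show "S (npow a0 (n-2) * (a * t)) = a * S (npow a0 (n-2) * t)"
    using SS(1) l lp by metis
  have "npow a0 (n-2) * (t * b) = (npow a0 (n-2) * t) * b" by (simp add: mult.assoc)
  then show "S (npow a0 (n-2) * (t * b)) = S (npow a0 (n-2) * t) * b"
    using SS(2) l lp by metis
qed

lemma mulprod_bl:
  assumes "bounded_linear S" "bounded_linear T"
  shows "bounded_linear (mulprod n a0 S T)"
  unfolding mulprod_def
  by (rule bounded_linear_compose[OF assms(1)],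
      rule bounded_linear_compose[OF bounded_linear_mult_right assms(2)])

lemma mulprod_in:
  fixes S :: "'a::real_normed_algebra \<Rightarrow> 'a"
  assumes S: "S \<in> Mul n" and n: "n \<ge> 3" and a0: "a0 \<in> center"
    and T: "T \<in> Mul m" and m: "m \<ge> 2"
  shows "mulprod n a0 S T \<in> Mul m"
proof -
  have TT: "bounded_linear T" "\<forall>a ys. length ys = m - 1 \<longrightarrow> T (a * lprod ys) = a * T (lprod ys)"
     "\<forall>xs b. length xs = m - 1 \<longrightarrow> T (lprod xs * b) = T (lprod xs) * b"
    using T Mul_iff[of m T] m by auto
  have Sb: "bounded_linear S" using S by (simp add: Mul_def)
  show ?thesis unfolding Mul_iff[OF m]
    using mulprod_bl[OF Sb TT(1)] TT key[OF S n a0]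
    by (simp add: mulprod_def)
qed

lemma Mul_mono:
  fixes T :: "'a::real_normed_algebra \<Rightarrow> 'a"
  assumes "T \<in> Mul (n-1)" "n \<ge> 3"
  shows "T \<in> Mul n"
proof -
  have TT: "bounded_linear T" "\<forall>a ys. length ys = n - 2 \<longrightarrow> T (a * lprod ys) = a * T (lprod ys)"
     "\<forall>xs b. length xs = n - 2 \<longrightarrow> T (lprod xs * b) = T (lprod xs) * b"
    using assms Mul_iff[of "n-1" T] by auto
  have "bounded_linear T
     \<and> (\<forall>a ys. length ys = n - 1 \<longrightarrow> T (a * lprod ys) = a * T (lprod ys))
     \<and> (\<forall>xs b. length xs = n - 1 \<longrightarrow> T (lprod xs * b) = T (lprod xs) * b)"
  proof (intro conjI allI impI)
    show "bounded_linear T" by (rule TT(1))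
  next
    fix a and ys :: "'a list" assume l: "length ys = n - 1"
    then obtain b c zs where ys: "ys = b # c # zs" using assms(2)
      by (cases ys; cases "tl ys") auto
    have "length ((b*c)#zs) = n - 2" using l ys by simp
    then show "T (a * lprod ys) = a * T (lprod ys)"
      using TT(2) by (metis ys lprod_merge)
  next
    fix b and ys :: "'a list" assume l: "length ys = n - 1"
    then obtain a c zs where ys: "ys = a # c # zs" using assms(2)
      by (cases ys; cases "tl ys") auto
    have "length ((a*c)#zs) = n - 2" using l ys by simp
    then show "T (lprod ys * b) = T (lprod ys) * b"
      using TT(3) by (metis ys lprod_merge)
  qed
  then show ?thesis using Mul_iff[of n T] assms(2) by simp
qed

lemma Mul_zero: "(\<lambda>x. 0) \<in> Mul m"
  by (simp add: Mul_def bounded_linear_zero)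

lemma Mul_add: assumes "f \<in> Mul m" "g \<in> Mul m" shows "(\<lambda>x. f x + g x) \<in> Mul m"
  unfolding Mul_def
proof (intro CollectI conjI allI impI)
  show "bounded_linear (\<lambda>x. f x + g x)" using assms by (auto simp: Mul_def intro: bounded_linear_add)
next
  fix as :: "'a list" assume l: "length as = m"
  have e: "f (lprod as) = hd as * f (lprod (tl as))" "f (lprod as) = f (lprod (butlast as)) * last as"
     "g (lprod as) = hd as * g (lprod (tl as))" "g (lprod as) = g (lprod (butlast as)) * last as"
    using assms l unfolding Mul_def by blast+
  show "f (lprod as) + g (lprod as) = hd as * (f (lprod (tl as)) + g (lprod (tl as)))"
    using e(1,3) by (simp add: distrib_left)
  show "f (lprod as) + g (lprod as) = (f (lprod (butlast as)) + g (lprod (butlast as))) * last as"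
    using e(2,4) by (simp add: distrib_right)
qed

lemma Mul_scale: "f \<in> Mul m \<Longrightarrow> (\<lambda>x. c *\<^sub>R f x) \<in> Mul m"
  unfolding Mul_def
  by (auto intro: bounded_linear_compose[OF bounded_linear_scaleR_right]
       simp: mult_scaleR_left mult_scaleR_right)

lemma MulL_subspace: "subspace (MulL m :: ('a::{real_normed_algebra,banach} \<Rightarrow>\<^sub>L 'a) set)"
  unfolding subspace_def MulL_def
  by (auto simp: Mul_zero Mul_add Mul_scale plus_blinfun.rep_eq scaleR_blinfun.rep_eq
      zero_blinfun.rep_eq)

lemma MulL_closed: "closed (MulL m :: ('a::{real_normed_algebra,banach} \<Rightarrow>\<^sub>L 'a) set)"
proof -
  have "MulL m = {T :: 'a \<Rightarrow>\<^sub>L 'a. \<forall>as. length as = m \<longrightarrow>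
        (blinfun_apply T (lprod as) = hd as * blinfun_apply T (lprod (tl as)) \<and>
         blinfun_apply T (lprod as) = blinfun_apply T (lprod (butlast as)) * last as)}"
    by (auto simp: MulL_def Mul_def blinfun.bounded_linear_right)
  also have "closed \<dots>"
  proof (intro closed_Collect_all)
    fix as :: "'a list"
    show "closed {T :: 'a \<Rightarrow>\<^sub>L 'a. length as = m \<longrightarrow>
        (blinfun_apply T (lprod as) = hd as * blinfun_apply T (lprod (tl as)) \<and>
         blinfun_apply T (lprod as) = blinfun_apply T (lprod (butlast as)) * last as)}"
    proof (cases "length as = m")
      case True
      then show ?thesis
        by (simp, intro closed_Collect_conj closed_Collect_eq continuous_intros)
    next
      case False then show ?thesis by simp
    qed
  qed
  finally show ?thesis .
qed

theorem mainTheorem8: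
  fixes a0 :: "'a::{real_normed_algebra,banach}"
  assumes "a0 \<in> center" and "a0 \<noteq> 0" and "norm a0 \<le> 1"
  shows "\<forall>n::nat. n \<ge> 3 \<longrightarrow>
     (\<forall>S\<in>Mul n. \<forall>T\<in>Mul 2. mulprod n a0 S T \<in> Mul 2)
   \<and> Mul (n - 1) \<subseteq> (Mul n :: ('a \<Rightarrow> 'a) set)
   \<and> subspace (MulL (n - 1) :: ('a \<Rightarrow>\<^sub>L 'a) set)
   \<and> closed (MulL (n - 1) :: ('a \<Rightarrow>\<^sub>L 'a) set)
   \<and> (\<forall>S\<in>Mul n. \<forall>T\<in>Mul (n - 1). mulprod n a0 S T \<in> Mul (n - 1))"
proof (intro allI impI conjI ballI subsetI)
  fix n :: nat assume n: "n \<ge> 3"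
  show "mulprod n a0 S T \<in> Mul 2" if "S \<in> Mul n" "T \<in> Mul 2" for S T :: "'a \<Rightarrow> 'a"
    using mulprod_in[OF that(1) n assms(1) that(2)] by simp
  show "mulprod n a0 S T \<in> Mul (n-1)" if "S \<in> Mul n" "T \<in> Mul (n-1)" for S T :: "'a \<Rightarrow> 'a"
    using mulprod_in[OF that(1) n assms(1) that(2)] n by simp
  show "T \<in> Mul n" if "T \<in> Mul (n-1)" for T :: "'a \<Rightarrow> 'a"
    using Mul_mono[OF that n] .
  show "subspace (MulL (n - 1) :: ('a \<Rightarrow>\<^sub>L 'a) set)" by (rule MulL_subspace)
  show "closed (MulL (n - 1) :: ('a \<Rightarrow>\<^sub>L 'a) set)" by (rule MulL_closed)
qed

end
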